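(* Let $(R,\mathfrak m,k)$ be a Noetherian local ring, $j\ge2$, and $M$ a finitely generated $R$-module with $p:=\operatorname{pd}_RM<\infty$. If $M$ satisfies the $(SW_j)$ condition, then for all $t=0,1,\dots,\operatorname{pd}_R\mathcal S_j(M)$, $$\beta_t^R(\mathcal S_j(M))=\sum_{\substack{(a_0,\dots,a_p)\in\mathbb N^{p+1}\\ \sum a_i=j,\ \sum ia_i=t}}\ \prod_{\substack{0\le i\le p\\ i\text{ even}}}\binom{\beta_i^R(M)+a_i-1}{a_i}\prod_{\substack{0\le i\le p\\ i\text{ odd}}}\binom{\beta_i^R(M)}{a_i}$$ (for both parities of $p$).
   Context: $\beta_i^R(N)$ is the $i$-th Betti number (rank of the $i$-th module in a minimal free resolution of $N$). $\mathcal S_j(M)$ is the $j$-th graded component of the symmetric algebra $\mathcal S_R(M)$. For a free module $F$ of finite rank, $D_a(F)$ is the $a$-th divided power (symmetric tensors in $F^{\otimes a}$; free with basis the divided power monomials $f_1^{(c_1)}\cdots f_r^{(c_r)}$, $\sum c_l=a$), and $\Lambda^aF$ the $a$-th exterior power. For a finite free resolution $\mathbf F_\bullet:0\to F_p\xrightarrow{\phi_p}\cdots\xrightarrow{\phi_1}F_0$ of $M$, the complex $\mathcal S_j\mathbf F_\bullet$ has $(\mathcal S_j\mathbf F_\bullet)_t=\bigoplus D_{a_0}F_0\otimes\Lambda^{a_1}F_1\otimes D_{a_2}F_2\otimes\Lambda^{a_3}F_3\otimes\cdots$, summed over $(a_0,\dots,a_p)\in\mathbb N^{p+1}$ with $\sum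 a_i=j$, $\sum ia_i=t$; the differential maps the summand indexed by $(a_0,\dots,a_p)$ only to summands indexed by $(a_0,\dots,a_i+1,a_{i+1}-1,\dots,a_p)$, by $(-1)^{a_0+2a_1+\cdots+(i+1)a_i}$ times identity on other factors tensored with: for $i$ odd, $f_1^{(c_1)}\cdots f_r^{(c_r)}\otimes v\mapsto\sum_lf_1^{(c_1)}\cdots f_l^{(c_l-1)}\cdots f_r^{(c_r)}\otimes\phi_{i+1}(f_l)\wedge v$ ($D_aF_{i+1}\otimes\Lambda^bF_i\to D_{a-1}F_{i+1}\otimes\Lambda^{b+1}F_i$); for $i$ even, $f_{l_1}\wedge\cdots\wedge f_{l_a}\otimes w\mapsto\sum_s(-1)^sf_{l_1}\wedge\cdots\widehat{f_{l_s}}\cdots\wedge f_{l_a}\otimes\phi_{i+1}(f_{l_s})\cup w$ ($\Lambda^aF_{i+1}\otimes D_bF_i\to\Lambda^{a-1}F_{i+1}\otimes D_{b+1}F_i$), where $g_m\cup g_1^{(c_1)}\cdots g_n^{(c_n)}$ raises $c_m$ by one. Standing assumption: the characteristic of $R$ is such that $\mathcal S_j\mathbf F_\bullet$ is a complex (e.g. all integers $2\le m\le jp$ are units in $R$). A free resolution is minimal if $\operatorname{Im}\phi_i\subseteq\mathfrak mF_{i-1}$. $M$ satisfies the $(SW_j)$ condition ($j\ge2$) if, for a finite minimal free resolution $\mathbf F_\bullet$ of $M$, $\mathcal S_j\mathbf F_\bullet$ is a finite free resolution of $\mathcal S_j(M)$. *)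

theory Defs
  imports Main "HOL-Library.Multiset" "HOL-Library.Function_Algebras" "HOL-Library.Extended_Nat"
begin

definition is_ideal :: "'a::comm_ring_1 set \<Rightarrow> bool" where
  "is_ideal I \<longleftrightarrow> 0 \<in> I \<and> (\<forall>x\<in>I. \<forall>y\<in>I. x + y \<in> I) \<and> (\<forall>r x. x \<in> I \<longrightarrow> r * x \<in> I)"

definition ideal_gen :: "'a::comm_ring_1 list \<Rightarrow> 'a set" where
  "ideal_gen xs = {(\<Sum>i<length xs. r i * xs ! i) | r. True}"

definition noetherian_ring :: "'a::comm_ring_1 itself \<Rightarrow> bool" where
  "noetherian_ring _ \<longleftrightarrow> (\<forall>I::'a set. is_ideal I \<longrightarrow> (\<exists>xs. I = ideal_gen xs))"

definition local_ring_max :: "'a::comm_ring_1 set \<Rightarrow> bool" where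
  "local_ring_max m \<longleftrightarrow> is_ideal m \<and> m \<noteq> UNIV \<and> (\<forall>x. x \<notin> m \<longrightarrow> x dvd 1)"

definition fin_gen :: "('a::comm_ring_1 \<Rightarrow> 'm::ab_group_add \<Rightarrow> 'm) \<Rightarrow> bool" where
  "fin_gen s \<longleftrightarrow> module s \<and> (\<exists>S. finite S \<and> module.span s S = UNIV)"

section \<open>Free resolutions of a module A/K (A, K submodules of the module type 'b)\<close>

text \<open>Vectors of the free module with basis I (finitely supported on I).\<close>
definition vecs :: "'i set \<Rightarrow> ('i \<Rightarrow> 'a::zero) set" where
  "vecs I = {x. \<forall>i. i \<notin> I \<longrightarrow> x i = 0}"

definition matapp :: "'i set \<Rightarrow> 'i set \<Rightarrow> ('i \<Rightarrow> 'i \<Rightarrow> 'a::comm_ring_1) \<Rightarrow> ('i \<Rightarrow> 'a) \<Rightarrow> ('i \<Rightarrow> 'a)" where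
  "matapp I J D x = (\<lambda>i. if i \<in> I then (\<Sum>j\<in>J. D i j * x j) else 0)"

definition lincomb :: "('a \<Rightarrow> 'b \<Rightarrow> 'b) \<Rightarrow> 'i set \<Rightarrow> ('i \<Rightarrow> 'a) \<Rightarrow> ('i \<Rightarrow> 'b) \<Rightarrow> 'b::ab_group_add" where
  "lincomb s I x g = (\<Sum>i\<in>I. s (x i) (g i))"

definition subquot :: "('a::comm_ring_1 \<Rightarrow> 'b::ab_group_add \<Rightarrow> 'b) \<Rightarrow> 'b set \<Rightarrow> 'b set \<Rightarrow> bool" where
  "subquot s A K \<longleftrightarrow> module s \<and> module.subspace s A \<and> module.subspace s K \<and> K \<subseteq> A"

text \<open>(I, D, g) is a free resolution (by free modules of finite rank) of the module A/K:
  F_t is free with basis I t, the differential F_t \<rightarrow> F_(t-1) has matrix D t,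
  and the augmentation F_0 \<rightarrow> A/K sends the basis element i to the class of g i.\<close>
definition free_res :: "('a::comm_ring_1 \<Rightarrow> 'b::ab_group_add \<Rightarrow> 'b) \<Rightarrow> 'b set \<Rightarrow> 'b set
    \<Rightarrow> (nat \<Rightarrow> 'i set) \<Rightarrow> (nat \<Rightarrow> 'i \<Rightarrow> 'i \<Rightarrow> 'a) \<Rightarrow> ('i \<Rightarrow> 'b) \<Rightarrow> bool" where
  "free_res s A K I D g \<longleftrightarrow>
     subquot s A K \<and> (\<forall>t. finite (I t)) \<and> g ` I 0 \<subseteq> A \<and>
     (\<forall>a\<in>A. \<exists>x\<in>vecs (I 0). a - lincomb s (I 0) x g \<in> K) \<and>
     (\<forall>x\<in>vecs (I 0). lincomb s (I 0) x g \<in> K \<longleftrightarrow>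
        (\<exists>y\<in>vecs (I 1). x = matapp (I 0) (I 1) (D 1) y)) \<and>
     (\<forall>t\<ge>1. \<forall>x\<in>vecs (I t). matapp (I (t - 1)) (I t) (D t) x = 0 \<longleftrightarrow>
        (\<exists>y\<in>vecs (I (Suc t)). x = matapp (I t) (I (Suc t)) (D (Suc t)) y))"

text \<open>Minimality: Im d_t \<subseteq> m F_(t-1), i.e. all matrix entries lie in m.\<close>
definition minimal_res :: "'a::comm_ring_1 set \<Rightarrow> (nat \<Rightarrow> 'i set) \<Rightarrow> (nat \<Rightarrow> 'i \<Rightarrow> 'i \<Rightarrow> 'a) \<Rightarrow> bool" where
  "minimal_res m I D \<longleftrightarrow> (\<forall>t\<ge>1. \<forall>i\<in>I (t - 1). \<forall>j\<in>I t. D t i j \<in> m)"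

definition betti :: "'a::comm_ring_1 set \<Rightarrow> ('a \<Rightarrow> 'b::ab_group_add \<Rightarrow> 'b) \<Rightarrow> 'b set \<Rightarrow> 'b set \<Rightarrow> nat \<Rightarrow> nat" where
  "betti m s A K t = (THE n. \<exists>(I::nat \<Rightarrow> nat set) D g.
      free_res s A K I D g \<and> minimal_res m I D \<and> card (I t) = n)"

definition pdim :: "('a::comm_ring_1 \<Rightarrow> 'b::ab_group_add \<Rightarrow> 'b) \<Rightarrow> 'b set \<Rightarrow> 'b set \<Rightarrow> enat" where
  "pdim s A K = (if \<exists>n (I::nat \<Rightarrow> nat set) D g. free_res s A K I D g \<and> (\<forall>t>n. I t = {})
     then enat (LEAST n. \<exists>(I::nat \<Rightarrow> nat set) D g. free_res s A K I D g \<and> (\<forall>t>n. I t = {}))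
     else \<infinity>)"

text \<open>S_j(M) is the free module on the j-element multisets of M modulo the
  multilinearity relations; realised as the quotient symA / symK inside 'm multiset \<Rightarrow> 'a.\<close>
definition sym_scale :: "'a::comm_ring_1 \<Rightarrow> ('m multiset \<Rightarrow> 'a) \<Rightarrow> ('m multiset \<Rightarrow> 'a)" where
  "sym_scale r f = (\<lambda>X. r * f X)"

definition delta :: "'m multiset \<Rightarrow> 'm multiset \<Rightarrow> 'a::comm_ring_1" where
  "delta Y = (\<lambda>X. if X = Y then 1 else 0)"

definition symA :: "nat \<Rightarrow> ('m multiset \<Rightarrow> 'a::comm_ring_1) set" where
  "symA j = {f. finite {X. f X \<noteq> 0} \<and> (\<forall>X. f X \<noteq> 0 \<longrightarrow> size X = j)}"

definition symK :: "('a::comm_ring_1 \<Rightarrow> 'm::ab_group_add \<Rightarrow> 'm) \<Rightarrow> nat \<Rightarrow> ('m multiset \<Rightarrow> 'a) set" where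
  "symK s j = module.span sym_scale
     ({delta (add_mset (x + y) X) - delta (add_mset x X) - delta (add_mset y X) | x y X. size X = j - 1}
    \<union> {delta (add_mset (s r x) X) - sym_scale r (delta (add_mset x X)) | r x X. size X = j - 1})"

text \<open>Basis of (S_j F)_t for F of length q with bases I 0, ..., I q: lists xs of length q+1,
  xs!i a multiset over I i of size a_i (a divided power monomial for i even, a strictly
  increasing wedge product (a set) for i odd).\<close>
definition symI :: "nat \<Rightarrow> nat \<Rightarrow> (nat \<Rightarrow> nat set) \<Rightarrow> nat \<Rightarrow> nat multiset list set" where
  "symI j q I t = {xs. length xs = Suc q \<and>
      (\<forall>i\<le>q. set_mset (xs ! i) \<subseteq> I i \<and> (odd i \<longrightarrow> (\<forall>x. count (xs ! i) x \<le> 1))) \<and>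
      (\<Sum>i\<le>q. size (xs ! i)) = j \<and> (\<Sum>i\<le>q. i * size (xs ! i)) = t}"

text \<open>Coefficient of the basis element ys in the image of basis element xs under the
  component of the differential lowering a_(i+1) and raising a_i.\<close>
definition sym_comp :: "(nat \<Rightarrow> nat set) \<Rightarrow> (nat \<Rightarrow> nat \<Rightarrow> nat \<Rightarrow> 'a::comm_ring_1) \<Rightarrow> nat
    \<Rightarrow> nat multiset list \<Rightarrow> nat multiset list \<Rightarrow> 'a" where
  "sym_comp I D i ys xs =
    (if odd i then
       (\<Sum>l\<in>set_mset (xs ! Suc i). \<Sum>m\<in>I i.
          if m \<notin># xs ! i \<and> ys = xs[Suc i := xs ! Suc i - {#l#}, i := add_mset m (xs ! i)]
          then (-1) ^ card {k \<in> set_mset (xs ! i). k < m} * D (Suc i) m l else 0)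
     else
       (\<Sum>l\<in>set_mset (xs ! Suc i). \<Sum>m\<in>I i.
          if ys = xs[Suc i := xs ! Suc i - {#l#}, i := add_mset m (xs ! i)]
          then (-1) ^ Suc (card {k \<in> set_mset (xs ! Suc i). k < l}) * D (Suc i) m l else 0))"

definition symD :: "nat \<Rightarrow> (nat \<Rightarrow> nat set) \<Rightarrow> (nat \<Rightarrow> nat \<Rightarrow> nat \<Rightarrow> 'a::comm_ring_1)
    \<Rightarrow> nat multiset list \<Rightarrow> nat multiset list \<Rightarrow> 'a" where
  "symD q I D ys xs = (\<Sum>i<q. (-1) ^ (\<Sum>k\<le>i. Suc k * size (xs ! k)) * sym_comp I D i ys xs)"

definition SW :: "'a::comm_ring_1 set \<Rightarrow> ('a \<Rightarrow> 'm::ab_group_add \<Rightarrow> 'm) \<Rightarrow> nat \<Rightarrow> bool" where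
  "SW m s j \<longleftrightarrow> (\<exists>q (I::nat \<Rightarrow> nat set) D g.
      free_res s UNIV {0} I D g \<and> minimal_res m I D \<and> (\<forall>t>q. I t = {}) \<and>
      (\<exists>g'. free_res sym_scale (symA j) (symK s j) (symI j q I) (\<lambda>_. symD q I D) g'))"

end

theory Submission
  imports Defs "HOL-Library.Countable_Set"
begin
lemma ideal_add: "is_ideal m \<Longrightarrow> x \<in> m \<Longrightarrow> y \<in> m \<Longrightarrow> x + y \<in> m"
  by (simp add: is_ideal_def)
lemma ideal_multL: "is_ideal m \<Longrightarrow> x \<in> m \<Longrightarrow> r * x \<in> m"
  by (simp add: is_ideal_def)
lemma ideal_multR: "is_ideal m \<Longrightarrow> x \<in> m \<Longrightarrow> x * r \<in> m"
  by (metis ideal_multL mult.commute)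
lemma ideal_zero: "is_ideal m \<Longrightarrow> 0 \<in> m"
  by (simp add: is_ideal_def)
lemma ideal_neg: "is_ideal m \<Longrightarrow> x \<in> m \<Longrightarrow> - x \<in> m"
  using ideal_multL[of m x "-1"] by simp
lemma ideal_diff: "is_ideal m \<Longrightarrow> x \<in> m \<Longrightarrow> y \<in> m \<Longrightarrow> x - y \<in> m"
  using ideal_add[of m x "-y"] ideal_neg[of m y] by simp
lemma ideal_sum: "is_ideal m \<Longrightarrow> (\<And>i. i \<in> S \<Longrightarrow> f i \<in> m) \<Longrightarrow> sum f S \<in> m"
  by (induction S rule: infinite_finite_induct) (auto simp: ideal_zero ideal_add)
lemma ideal_prod: "is_ideal m \<Longrightarrow> finite S \<Longrightarrow> i \<in> S \<Longrightarrow> f i \<in> m \<Longrightarrow> prod f S \<in> m"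
  by (simp add: prod.remove ideal_multR)
lemma ideal_prod_one: "is_ideal m \<Longrightarrow> (\<And>i. i \<in> S \<Longrightarrow> f i - 1 \<in> m) \<Longrightarrow> prod f S - 1 \<in> m"
proof (induction S rule: infinite_finite_induct)
  case (insert x F)
  have "prod f (insert x F) - 1 = (f x - 1) * prod f F + (prod f F - 1)"
    using insert by (simp add: algebra_simps)
  moreover have "(f x - 1) * prod f F \<in> m" using insert by (simp add: ideal_multR)
  moreover have "prod f F - 1 \<in> m" using insert by simp
  ultimately show ?case using ideal_add[OF insert.prems(1)] by metis
qed (auto simp: ideal_zero)

lemma rank_le_aux:
  fixes m :: "'a::comm_ring_1 set"
  assumes m: "is_ideal m" "1 \<notin> m" "\<forall>x. x \<notin> m \<longrightarrow> x dvd 1"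
  shows "finite X \<Longrightarrow> finite Y \<Longrightarrow> card X = n \<Longrightarrow>
    \<forall>a\<in>X. \<forall>b\<in>X. (\<Sum>y\<in>Y. (B :: 'i \<Rightarrow> 'j \<Rightarrow> 'a) a y * A y b) - (if a = b then 1 else 0) \<in> m \<Longrightarrow> card X \<le> card Y"
proof (induction n arbitrary: X Y A)
  case 0
  then show ?case by simp
next
  case (Suc n)
  have "X \<noteq> {}" using Suc.prems(3) by auto
  then obtain x0 where x0: "x0 \<in> X" by blast
  have "(\<Sum>y\<in>Y. B x0 y * A y x0) - (if x0 = x0 then 1 else 0) \<in> m" using Suc.prems(4) x0 by blast
  then have d: "(\<Sum>y\<in>Y. B x0 y * A y x0) - 1 \<in> m" by simp
  have nm: "(\<Sum>y\<in>Y. B x0 y * A y x0) \<notin> m"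
  proof
    assume "(\<Sum>y\<in>Y. B x0 y * A y x0) \<in> m"
    then have "(\<Sum>y\<in>Y. B x0 y * A y x0) - ((\<Sum>y\<in>Y. B x0 y * A y x0) - 1) \<in> m" using d ideal_diff[OF m(1)] by blast
    then show False using m(2) by simp
  qed
  have "\<exists>y0. y0 \<in> Y \<and> B x0 y0 * A y0 x0 \<notin> m"
  proof (rule ccontr)
    assume "\<not> (\<exists>y0. y0 \<in> Y \<and> B x0 y0 * A y0 x0 \<notin> m)"
    then have "\<And>y. y \<in> Y \<Longrightarrow> B x0 y * A y x0 \<in> m" by blast
    then have "(\<Sum>y\<in>Y. B x0 y * A y x0) \<in> m" by (rule ideal_sum[OF m(1)])
    then show False using nm by contradiction
  qed
  then obtain y0 where y0: "y0 \<in> Y" "B x0 y0 * A y0 x0 \<notin> m" by blast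
  have "A y0 x0 \<notin> m"
  proof
    assume "A y0 x0 \<in> m"
    then have "B x0 y0 * A y0 x0 \<in> m" by (rule ideal_multL[OF m(1)])
    then show False using y0(2) by contradiction
  qed
  then obtain v where v: "A y0 x0 * v = 1" using m(3) by (metis dvd_def)
  define A' where "A' y x = A y x - A y x0 * v * A y0 x" for y x
  let ?X = "X - {x0}" and ?Y = "Y - {y0}"
  have key: "(\<Sum>y\<in>?Y. B a y * A' y b) - (if a = b then 1 else 0) \<in> m" if a: "a \<in> ?X" and b: "b \<in> ?X" for a b
  proof -
    have e: "(\<Sum>y\<in>Y. B a y * A y b) = (\<Sum>y\<in>?Y. B a y * A' y b) + (\<Sum>y\<in>Y. B a y * A y x0) * (v * A y0 b)"
    proof -
      have p: "B a y * A y b = B a y * A' y b + (B a y * A y x0) * (v * A y0 b)" for y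
        by (simp add: A'_def algebra_simps)
      have "(\<Sum>y\<in>Y. B a y * A y b) = (\<Sum>y\<in>Y. B a y * A' y b + (B a y * A y x0) * (v * A y0 b))"
        by (simp only: p)
      also have "\<dots> = (\<Sum>y\<in>Y. B a y * A' y b) + (\<Sum>y\<in>Y. (B a y * A y x0) * (v * A y0 b))"
        by (rule sum.distrib)
      also have "(\<Sum>y\<in>Y. (B a y * A y x0) * (v * A y0 b)) = (\<Sum>y\<in>Y. B a y * A y x0) * (v * A y0 b)"
        by (rule sum_distrib_right[symmetric])
      finally have 1: "(\<Sum>y\<in>Y. B a y * A y b) = (\<Sum>y\<in>Y. B a y * A' y b) + (\<Sum>y\<in>Y. B a y * A y x0) * (v * A y0 b)" .
      have "A' y0 b = A y0 b - (A y0 x0 * v) * A y0 b" by (simp add: A'_def mult.assoc)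
      then have "A' y0 b = 0" using v by simp
      moreover have "(\<Sum>y\<in>Y. B a y * A' y b) = B a y0 * A' y0 b + (\<Sum>y\<in>?Y. B a y * A' y b)"
        using Suc.prems(2) y0(1) by (rule sum.remove)
      ultimately show ?thesis using 1 by simp
    qed
    have "a \<noteq> x0" using a by simp
    then have "(\<Sum>y\<in>Y. B a y * A y x0) - (if a = x0 then 1 else 0) \<in> m" using Suc.prems(4) a x0 by blast
    then have "(\<Sum>y\<in>Y. B a y * A y x0) \<in> m" using \<open>a \<noteq> x0\<close> by simp
    then have c: "(\<Sum>y\<in>Y. B a y * A y x0) * (v * A y0 b) \<in> m" using ideal_multR[OF m(1)] by blast
    have "(\<Sum>y\<in>Y. B a y * A y b) - (if a = b then 1 else 0) \<in> m" using Suc.prems(4) a b by blast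
    then have "((\<Sum>y\<in>?Y. B a y * A' y b) - (if a = b then 1 else 0)) + (\<Sum>y\<in>Y. B a y * A y x0) * (v * A y0 b) \<in> m"
      unfolding e by (simp only: diff_add_eq)
    then have "((\<Sum>y\<in>?Y. B a y * A' y b) - (if a = b then 1 else 0)) + (\<Sum>y\<in>Y. B a y * A y x0) * (v * A y0 b)
       - (\<Sum>y\<in>Y. B a y * A y x0) * (v * A y0 b) \<in> m" using c ideal_diff[OF m(1)] by blast
    then show ?thesis by (simp only: add_diff_cancel)
  qed
  have "card ?X = n" using Suc.prems(1,3) x0 by simp
  then have "card ?X \<le> card ?Y" using Suc.IH[of ?X ?Y A'] Suc.prems(1,2) key by blast
  moreover have "card X > 0" "card Y > 0" using Suc.prems(1,2) x0 y0(1) card_gt_0_iff by blast+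
  ultimately show ?case using Suc.prems(1,2) x0 y0(1) by (simp add: card_Diff_singleton)
qed

lemma rank_le:
  fixes A :: "'j \<Rightarrow> 'i \<Rightarrow> 'a::comm_ring_1" and B :: "'i \<Rightarrow> 'j \<Rightarrow> 'a"
  assumes m: "is_ideal m" "1 \<notin> m" "\<forall>x. x \<notin> m \<longrightarrow> x dvd 1" and fX: "finite X" and fY: "finite Y"
    and h: "\<forall>a\<in>X. \<forall>b\<in>X. (\<Sum>y\<in>Y. B a y * A y b) - (if a = b then 1 else 0) \<in> m"
  shows "card X \<le> card Y"
  using rank_le_aux[OF m fX fY refl h] .

definition mm :: "'k set \<Rightarrow> ('i \<Rightarrow> 'k \<Rightarrow> 'a::comm_ring_1) \<Rightarrow> ('k \<Rightarrow> 'j \<Rightarrow> 'a) \<Rightarrow> 'i \<Rightarrow> 'j \<Rightarrow> 'a" where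
  "mm Y M N a c = (\<Sum>b\<in>Y. M a b * N b c)"

lemma mm_assoc: "finite X \<Longrightarrow> finite Y \<Longrightarrow> mm Y (mm X M N) P a c = mm X M (mm Y N P) a c"
  unfolding mm_def by (simp add: sum_distrib_left sum_distrib_right mult.assoc sum.swap[of _ Y X])

lemma delta_sum_right: "finite S \<Longrightarrow> i \<in> S \<Longrightarrow> (\<Sum>b\<in>S. f b * (if b = i then 1 else 0)) = (f i :: 'a::comm_ring_1)"
  by (simp add: if_distrib[of "\<lambda>x. _ * x"] cong: if_cong)
lemma delta_sum_left: "finite S \<Longrightarrow> i \<in> S \<Longrightarrow> (\<Sum>b\<in>S. (if i = b then 1 else 0) * f b) = (f i :: 'a::comm_ring_1)"
  by (simp add: if_distrib[of "\<lambda>x. x * _"] cong: if_cong)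

lemma lincomb_mm:
  assumes ms: "Modules.module s" and "finite X"
  shows "lincomb s Y (\<lambda>b. \<Sum>a\<in>X. M b a * v a) h = (\<Sum>a\<in>X. s (v a) (lincomb s Y (\<lambda>b. M b a) h))"
proof -
  have e: "s (\<Sum>a\<in>X. M b a * v a) (h b) = (\<Sum>a\<in>X. s (v a) (s (M b a) (h b)))" for b
  proof -
    have "s (\<Sum>a\<in>X. M b a * v a) (h b) = (\<Sum>a\<in>X. s (M b a * v a) (h b))"
      by (rule Modules.module.scale_sum_left[OF ms])
    also have "\<dots> = (\<Sum>a\<in>X. s (v a) (s (M b a) (h b)))"
      by (rule sum.cong[OF refl]) (simp add: Modules.module.scale_scale[OF ms] mult.commute)
    finally show ?thesis .
  qed
  have "lincomb s Y (\<lambda>b. \<Sum>a\<in>X. M b a * v a) h = (\<Sum>b\<in>Y. \<Sum>a\<in>X. s (v a) (s (M b a) (h b)))"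
    unfolding lincomb_def using e by (rule sum.cong[OF refl])
  also have "\<dots> = (\<Sum>a\<in>X. \<Sum>b\<in>Y. s (v a) (s (M b a) (h b)))" by (rule sum.swap)
  also have "\<dots> = (\<Sum>a\<in>X. s (v a) (lincomb s Y (\<lambda>b. M b a) h))"
    unfolding lincomb_def by (rule sum.cong[OF refl]) (rule Modules.module.scale_sum_right[OF ms, symmetric])
  finally show ?thesis .
qed

lemma lincomb_cong_K:
  assumes "Modules.module s" "Modules.module.subspace s K" and "\<And>a. a \<in> X \<Longrightarrow> u a - w a \<in> K"
  shows "(\<Sum>a\<in>X. s (c a) (u a)) - (\<Sum>a\<in>X. s (c a) (w a)) \<in> K"
proof -
  have "(\<Sum>a\<in>X. s (c a) (u a)) - (\<Sum>a\<in>X. s (c a) (w a)) = (\<Sum>a\<in>X. s (c a) (u a - w a))"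
    by (simp only: sum_subtractf[symmetric] Modules.module.scale_right_diff_distrib[OF assms(1)])
  also have "\<dots> \<in> K"
    by (rule Modules.module.subspace_sum[OF assms(1,2)], rule Modules.module.subspace_scale[OF assms(1,2)], rule assms(3))
  finally show ?thesis .
qed

lemma lincomb_restrict: "lincomb s X (\<lambda>b. if b \<in> X then v b else 0) h = lincomb s X v h"
  unfolding lincomb_def by (rule sum.cong) auto

lemma restrict_vecs: "(\<lambda>b. if b \<in> X then v b else 0) \<in> vecs X"
  by (simp add: vecs_def)

context
  fixes s :: "'a::comm_ring_1 \<Rightarrow> 'b::ab_group_add \<Rightarrow> 'b" and A K and I :: "nat \<Rightarrow> 'i set" and D g
  assumes fr: "free_res s A K I D g"
begin

lemma fr_fin: "finite (I t)" using fr by (simp add: free_res_def)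
lemma fr_module: "Modules.module s" using fr by (simp add: free_res_def subquot_def)
lemma fr_subK: "Modules.module.subspace s K" using fr by (simp add: free_res_def subquot_def)

lemma fr_exact0: "x \<in> vecs (I 0) \<Longrightarrow> lincomb s (I 0) x g \<in> K \<longleftrightarrow> (\<exists>y\<in>vecs (I 1). x = matapp (I 0) (I 1) (D 1) y)"
  using fr by (simp add: free_res_def)
lemma fr_exact: "1 \<le> t \<Longrightarrow> x \<in> vecs (I t) \<Longrightarrow> matapp (I (t - 1)) (I t) (D t) x = 0 \<longleftrightarrow>
        (\<exists>y\<in>vecs (I (Suc t)). x = matapp (I t) (I (Suc t)) (D (Suc t)) y)"
  using fr by (simp add: free_res_def)

lemma R1: "a \<in> A \<Longrightarrow> \<exists>x\<in>vecs (I 0). a - lincomb s (I 0) x g \<in> K"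
  using fr by (simp add: free_res_def)

lemma R2a:
  assumes "lincomb s (I 0) v g \<in> K"
  shows "\<exists>y\<in>vecs (I 1). \<forall>a\<in>I 0. v a = (\<Sum>b\<in>I 1. D 1 a b * y b)"
proof -
  let ?x = "\<lambda>b. if b \<in> I 0 then v b else 0"
  have "lincomb s (I 0) ?x g \<in> K" using assms lincomb_restrict by metis
  then obtain y where "y \<in> vecs (I 1)" "?x = matapp (I 0) (I 1) (D 1) y"
    using fr restrict_vecs[of "I 0" v] unfolding free_res_def by blast
  then show ?thesis by (intro bexI[of _ y]) (auto simp: matapp_def fun_eq_iff split: if_splits)
qed

lemma R2b:
  assumes "c \<in> I 1"
  shows "lincomb s (I 0) (\<lambda>a. D 1 a c) g \<in> K"
proof -
  let ?e = "\<lambda>b. if b = c then 1 else 0"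
  have e: "?e \<in> vecs (I 1)" using assms by (simp add: vecs_def)
  have x: "matapp (I 0) (I 1) (D 1) ?e = (\<lambda>a. if a \<in> I 0 then D 1 a c else 0)"
    using assms fr_fin by (simp add: matapp_def fun_eq_iff delta_sum_right)
  have "matapp (I 0) (I 1) (D 1) ?e \<in> vecs (I 0)" by (simp add: matapp_def vecs_def)
  then have "lincomb s (I 0) (matapp (I 0) (I 1) (D 1) ?e) g \<in> K"
    using fr_exact0[OF \<open>matapp (I 0) (I 1) (D 1) ?e \<in> vecs (I 0)\<close>] e by blast
  then show ?thesis using x lincomb_restrict by metis
qed

lemma R3a:
  assumes "\<forall>a\<in>I t. (\<Sum>b\<in>I (Suc t). D (Suc t) a b * v b) = 0"
  shows "\<exists>y\<in>vecs (I (Suc (Suc t))). \<forall>a\<in>I (Suc t). v a = (\<Sum>b\<in>I (Suc (Suc t)). D (Suc (Suc t)) a b * y b)"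
proof -
  let ?x = "\<lambda>b. if b \<in> I (Suc t) then v b else 0"
  have "matapp (I t) (I (Suc t)) (D (Suc t)) ?x = 0"
  proof -
    have "\<And>a. a \<in> I t \<Longrightarrow> (\<Sum>b\<in>I (Suc t). D (Suc t) a b * ?x b) = (\<Sum>b\<in>I (Suc t). D (Suc t) a b * v b)"
      by (rule sum.cong) auto
    then show ?thesis using assms by (auto simp: matapp_def fun_eq_iff)
  qed
  then have "matapp (I (Suc t - 1)) (I (Suc t)) (D (Suc t)) ?x = 0" by simp
  then obtain y where "y \<in> vecs (I (Suc (Suc t)))" "?x = matapp (I (Suc t)) (I (Suc (Suc t))) (D (Suc (Suc t))) y"
    using fr restrict_vecs[of "I (Suc t)" v] unfolding free_res_def
    by (metis le_add1 plus_1_eq_Suc)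
  then show ?thesis by (intro bexI[of _ y]) (auto simp: matapp_def fun_eq_iff split: if_splits)
qed

lemma R3b:
  assumes "a \<in> I t" "c \<in> I (Suc (Suc t))"
  shows "mm (I (Suc t)) (D (Suc t)) (D (Suc (Suc t))) a c = 0"
proof -
  let ?e = "\<lambda>b. if b = c then 1 else 0"
  have e: "?e \<in> vecs (I (Suc (Suc t)))" using assms by (simp add: vecs_def)
  let ?x = "matapp (I (Suc t)) (I (Suc (Suc t))) (D (Suc (Suc t))) ?e"
  have x: "?x = (\<lambda>a. if a \<in> I (Suc t) then D (Suc (Suc t)) a c else 0)"
    using assms fr_fin by (simp add: matapp_def fun_eq_iff delta_sum_right)
  have "?x \<in> vecs (I (Suc t))" by (simp add: matapp_def vecs_def)
  moreover have "\<forall>x\<in>vecs (I (Suc t)). matapp (I (Suc t - 1)) (I (Suc t)) (D (Suc t)) x = 0 \<longleftrightarrow>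
        (\<exists>y\<in>vecs (I (Suc (Suc t))). x = matapp (I (Suc t)) (I (Suc (Suc t))) (D (Suc (Suc t))) y)"
    using fr_exact[of "Suc t"] by simp
  ultimately have "matapp (I t) (I (Suc t)) (D (Suc t)) ?x = 0" using e by auto
  then have "matapp (I t) (I (Suc t)) (D (Suc t)) (\<lambda>a. if a \<in> I (Suc t) then D (Suc (Suc t)) a c else 0) a = 0"
    using x by simp
  then have "(\<Sum>b\<in>I (Suc t). D (Suc t) a b * (if b \<in> I (Suc t) then D (Suc (Suc t)) b c else 0)) = 0"
    using assms unfolding matapp_def by simp
  moreover have "(\<Sum>b\<in>I (Suc t). D (Suc t) a b * (if b \<in> I (Suc t) then D (Suc (Suc t)) b c else 0))
     = (\<Sum>b\<in>I (Suc t). D (Suc t) a b * D (Suc (Suc t)) b c)" by (rule sum.cong) auto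
  ultimately show ?thesis unfolding mm_def by simp
qed

end

fun cmap :: "('a::comm_ring_1 \<Rightarrow> 'b::ab_group_add \<Rightarrow> 'b) \<Rightarrow> 'b set \<Rightarrow> (nat \<Rightarrow> 'i set) \<Rightarrow> (nat \<Rightarrow> 'i \<Rightarrow> 'i \<Rightarrow> 'a) \<Rightarrow> ('i \<Rightarrow> 'b)
   \<Rightarrow> (nat \<Rightarrow> 'j set) \<Rightarrow> (nat \<Rightarrow> 'j \<Rightarrow> 'j \<Rightarrow> 'a) \<Rightarrow> ('j \<Rightarrow> 'b) \<Rightarrow> nat \<Rightarrow> 'j \<Rightarrow> 'i \<Rightarrow> 'a" where
  "cmap s K I D g J E h 0 = (\<lambda>b i. (SOME x. x \<in> vecs (J 0) \<and> g i - lincomb s (J 0) x h \<in> K) b)"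
| "cmap s K I D g J E h (Suc t) = (\<lambda>b i. (SOME x. x \<in> vecs (J (Suc t)) \<and>
      (\<forall>a\<in>J t. mm (I t) (cmap s K I D g J E h t) (D (Suc t)) a i = (\<Sum>b\<in>J (Suc t). E (Suc t) a b * x b))) b)"

declare cmap.simps[simp del]

definition chain_map where
  "chain_map s K I D g J E h \<Phi> \<longleftrightarrow> (\<forall>i\<in>I 0. g i - lincomb s (J 0) (\<lambda>b. \<Phi> 0 b i) h \<in> K) \<and>
     (\<forall>t. \<forall>i\<in>I (Suc t). \<forall>a\<in>J t. mm (J (Suc t)) (E (Suc t)) (\<Phi> (Suc t)) a i = mm (I t) (\<Phi> t) (D (Suc t)) a i)"

lemma chain_map_exists:
  fixes s :: "'a::comm_ring_1 \<Rightarrow> 'b::ab_group_add \<Rightarrow> 'b" and I :: "nat \<Rightarrow> 'i set" and J :: "nat \<Rightarrow> 'j set"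
  assumes F: "free_res s A K I D g" and G: "free_res s A K J E h"
  shows "chain_map s K I D g J E h (cmap s K I D g J E h)"
proof -
  let ?P = "cmap s K I D g J E h"
  have ms: "Modules.module s" and sK: "Modules.module.subspace s K" using fr_module[OF F] fr_subK[OF F] by auto
  have c0: "g i - lincomb s (J 0) (\<lambda>b. ?P 0 b i) h \<in> K" if i: "i \<in> I 0" for i
  proof -
    have "g i \<in> A" using F i by (auto simp: free_res_def)
    then have "\<exists>x. x \<in> vecs (J 0) \<and> g i - lincomb s (J 0) x h \<in> K" using R1[OF G] by blast
    then have "(SOME x. x \<in> vecs (J 0) \<and> g i - lincomb s (J 0) x h \<in> K) \<in> vecs (J 0) \<and>
       g i - lincomb s (J 0) (SOME x. x \<in> vecs (J 0) \<and> g i - lincomb s (J 0) x h \<in> K) h \<in> K"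
      by (rule someI_ex)
    then show ?thesis by (simp add: cmap.simps(1))
  qed
  have Q: "\<forall>i\<in>I (Suc t). \<forall>a\<in>J t. mm (I t) (?P t) (D (Suc t)) a i = (\<Sum>b\<in>J (Suc t). E (Suc t) a b * ?P (Suc t) b i)" for t
  proof (induction t)
    case 0
    show ?case
    proof
      fix i assume i: "i \<in> I (Suc 0)"
      let ?v = "\<lambda>a. mm (I 0) (?P 0) (D 1) a i"
      have e: "lincomb s (J 0) ?v h = (\<Sum>a\<in>I 0. s (D 1 a i) (lincomb s (J 0) (\<lambda>b. ?P 0 b a) h))"
        unfolding mm_def by (rule lincomb_mm[OF ms fr_fin[OF F]])
      moreover have d: "(\<Sum>a\<in>I 0. s (D 1 a i) (g a)) - (\<Sum>a\<in>I 0. s (D 1 a i) (lincomb s (J 0) (\<lambda>b. ?P 0 b a) h)) \<in> K"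
        by (rule lincomb_cong_K[OF ms sK c0])
      moreover have x: "(\<Sum>a\<in>I 0. s (D 1 a i) (g a)) \<in> K"
        using R2b[OF F, of i] i unfolding lincomb_def by simp
      ultimately have "lincomb s (J 0) ?v h = (\<Sum>a\<in>I 0. s (D 1 a i) (g a)) - ((\<Sum>a\<in>I 0. s (D 1 a i) (g a)) - (\<Sum>a\<in>I 0. s (D 1 a i) (lincomb s (J 0) (\<lambda>b. ?P 0 b a) h)))"
        unfolding e by (simp add: algebra_simps)
      moreover have "(\<Sum>a\<in>I 0. s (D 1 a i) (g a)) - ((\<Sum>a\<in>I 0. s (D 1 a i) (g a)) - (\<Sum>a\<in>I 0. s (D 1 a i) (lincomb s (J 0) (\<lambda>b. ?P 0 b a) h))) \<in> K"
        by (rule Modules.module.subspace_diff[OF ms sK x d])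
      ultimately have "lincomb s (J 0) ?v h \<in> K" by simp
      then obtain y where "y \<in> vecs (J 1)" "\<forall>a\<in>J 0. ?v a = (\<Sum>b\<in>J 1. E 1 a b * y b)"
        using R2a[OF G] by blast
      then have ex: "\<exists>x. x \<in> vecs (J (Suc 0)) \<and> (\<forall>a\<in>J 0. ?v a = (\<Sum>b\<in>J (Suc 0). E (Suc 0) a b * x b))"
        by auto
      show "\<forall>a\<in>J 0. mm (I 0) (?P 0) (D (Suc 0)) a i = (\<Sum>b\<in>J (Suc 0). E (Suc 0) a b * ?P (Suc 0) b i)"
        using someI_ex[OF ex] by (simp add: cmap.simps(2))
    qed
  next
    case (Suc t)
    show ?case
    proof
      fix i assume i: "i \<in> I (Suc (Suc t))"
      let ?v = "\<lambda>a. mm (I (Suc t)) (?P (Suc t)) (D (Suc (Suc t))) a i"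
      have z: "(\<Sum>b\<in>J (Suc t). E (Suc t) a b * ?v b) = 0" if a: "a \<in> J t" for a
      proof -
        have "(\<Sum>b\<in>J (Suc t). E (Suc t) a b * ?v b) = mm (J (Suc t)) (E (Suc t)) (mm (I (Suc t)) (?P (Suc t)) (D (Suc (Suc t)))) a i"
          by (simp add: mm_def)
        also have "\<dots> = mm (I (Suc t)) (mm (J (Suc t)) (E (Suc t)) (?P (Suc t))) (D (Suc (Suc t))) a i"
          by (rule mm_assoc[symmetric, OF fr_fin[OF G] fr_fin[OF F]])
        also have "\<dots> = mm (I (Suc t)) (mm (I t) (?P t) (D (Suc t))) (D (Suc (Suc t))) a i"
          unfolding mm_def[of "I (Suc t)"]
        proof (rule sum.cong[OF refl])
          fix c assume c: "c \<in> I (Suc t)"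
          have "mm (J (Suc t)) (E (Suc t)) (?P (Suc t)) a c = (\<Sum>b\<in>J (Suc t). E (Suc t) a b * ?P (Suc t) b c)"
            by (simp only: mm_def)
          also have "\<dots> = mm (I t) (?P t) (D (Suc t)) a c" using Suc.IH a c by simp
          finally show "mm (J (Suc t)) (E (Suc t)) (?P (Suc t)) a c * D (Suc (Suc t)) c i =
              mm (I t) (?P t) (D (Suc t)) a c * D (Suc (Suc t)) c i" by simp
        qed
        also have "\<dots> = mm (I t) (?P t) (mm (I (Suc t)) (D (Suc t)) (D (Suc (Suc t)))) a i"
          by (rule mm_assoc[OF fr_fin[OF F] fr_fin[OF F]])
        also have "\<dots> = 0" unfolding mm_def[of "I t"] using R3b[OF F _ i] by simp
        finally show ?thesis .
      qed
      then obtain y where "y \<in> vecs (J (Suc (Suc t)))" "\<forall>a\<in>J (Suc t). ?v a = (\<Sum>b\<in>J (Suc (Suc t)). E (Suc (Suc t)) a b * y b)"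
        using R3a[OF G, of t ?v] by blast
      then have ex: "\<exists>x. x \<in> vecs (J (Suc (Suc t))) \<and> (\<forall>a\<in>J (Suc t). ?v a = (\<Sum>b\<in>J (Suc (Suc t)). E (Suc (Suc t)) a b * x b))"
        by auto
      show "\<forall>a\<in>J (Suc t). mm (I (Suc t)) (?P (Suc t)) (D (Suc (Suc t))) a i = (\<Sum>b\<in>J (Suc (Suc t)). E (Suc (Suc t)) a b * ?P (Suc (Suc t)) b i)"
        using someI_ex[OF ex] by (simp add: cmap.simps(2))
    qed
  qed
  show ?thesis unfolding chain_map_def using c0 Q by (simp add: mm_def)
qed

definition nullmap where
  "nullmap s K I D g X \<longleftrightarrow> (\<forall>i\<in>I 0. lincomb s (I 0) (\<lambda>b. X 0 b i) g \<in> K) \<and>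
     (\<forall>t. \<forall>i\<in>I (Suc t). \<forall>a\<in>I t. mm (I (Suc t)) (D (Suc t)) (X (Suc t)) a i = mm (I t) (X t) (D (Suc t)) a i)"

lemma lincomb_diff: "Modules.module s \<Longrightarrow> lincomb s X (\<lambda>b. u b - w b) g = lincomb s X u g - lincomb s X w g"
  unfolding lincomb_def by (simp add: Modules.module.scale_left_diff_distrib sum_subtractf)

lemma lincomb_delta: "Modules.module s \<Longrightarrow> finite X \<Longrightarrow> i \<in> X \<Longrightarrow> lincomb s X (\<lambda>b. if b = i then 1 else 0) g = g i"
  unfolding lincomb_def by (simp add: if_distrib[of "\<lambda>x. s x _"] Modules.module.scale_zero_left Modules.module.scale_one cong: if_cong)

lemma mm_minus_delta_right: "finite X \<Longrightarrow> i \<in> X \<Longrightarrow>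
   mm X M (\<lambda>b c. N b c - (if b = c then 1 else 0)) a i = mm X M N a i - (M a i :: 'a::comm_ring_1)"
  unfolding mm_def by (simp add: right_diff_distrib sum_subtractf delta_sum_right)

lemma mm_minus_delta_left: "finite X \<Longrightarrow> a \<in> X \<Longrightarrow>
   mm X (\<lambda>b c. N b c - (if b = c then 1 else 0)) M a i = mm X N M a i - (M a i :: 'a::comm_ring_1)"
  unfolding mm_def by (simp add: left_diff_distrib sum_subtractf delta_sum_left)

lemma compose_null:
  fixes s :: "'a::comm_ring_1 \<Rightarrow> 'b::ab_group_add \<Rightarrow> 'b" and I :: "nat \<Rightarrow> 'i set" and J :: "nat \<Rightarrow> 'j set"
  assumes F: "free_res s A K I D g" and G: "free_res s A K J E h"
    and phi: "chain_map s K I D g J E h \<phi>" and psi: "chain_map s K J E h I D g \<psi>"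
  shows "nullmap s K I D g (\<lambda>t b i. mm (J t) (\<psi> t) (\<phi> t) b i - (if b = i then 1 else 0))"
proof -
  have ms: "Modules.module s" and sK: "Modules.module.subspace s K" using fr_module[OF F] fr_subK[OF F] by auto
  have fI: "finite (I t)" and fJ: "finite (J t)" for t using fr_fin[OF F] fr_fin[OF G] by auto
  have z0: "lincomb s (I 0) (\<lambda>b. mm (J 0) (\<psi> 0) (\<phi> 0) b i - (if b = i then 1 else 0)) g \<in> K" if i: "i \<in> I 0" for i
  proof -
    let ?L = "\<lambda>c. lincomb s (I 0) (\<lambda>b. \<psi> 0 b c) g"
    let ?T = "(\<Sum>c\<in>J 0. s (\<phi> 0 c i) (h c))"
    have e1: "lincomb s (I 0) (\<lambda>b. mm (J 0) (\<psi> 0) (\<phi> 0) b i) g = (\<Sum>c\<in>J 0. s (\<phi> 0 c i) (?L c))"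
      unfolding mm_def by (rule lincomb_mm[OF ms fJ])
    have e2: "lincomb s (I 0) (\<lambda>b. if b = i then 1 else 0) g = g i" by (rule lincomb_delta[OF ms fI i])
    have k1: "?T - (\<Sum>c\<in>J 0. s (\<phi> 0 c i) (?L c)) \<in> K"
      by (rule lincomb_cong_K[OF ms sK]) (use psi in \<open>auto simp: chain_map_def\<close>)
    have k2: "g i - ?T \<in> K" using phi i by (auto simp: chain_map_def lincomb_def)
    have "lincomb s (I 0) (\<lambda>b. mm (J 0) (\<psi> 0) (\<phi> 0) b i - (if b = i then 1 else 0)) g
       = - ((?T - (\<Sum>c\<in>J 0. s (\<phi> 0 c i) (?L c))) + (g i - ?T))"
      unfolding lincomb_diff[OF ms] e1 e2 by (simp add: algebra_simps)
    also have "\<dots> \<in> K"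
      by (rule Modules.module.subspace_neg[OF ms sK], rule Modules.module.subspace_add[OF ms sK k1 k2])
    finally show ?thesis .
  qed
  have zS: "mm (I (Suc t)) (D (Suc t)) (\<lambda>b i. mm (J (Suc t)) (\<psi> (Suc t)) (\<phi> (Suc t)) b i - (if b = i then 1 else 0)) a i
       = mm (I t) (\<lambda>b i. mm (J t) (\<psi> t) (\<phi> t) b i - (if b = i then 1 else 0)) (D (Suc t)) a i"
    if i: "i \<in> I (Suc t)" and a: "a \<in> I t" for t i a
  proof -
    have "mm (I (Suc t)) (D (Suc t)) (mm (J (Suc t)) (\<psi> (Suc t)) (\<phi> (Suc t))) a i
        = mm (J (Suc t)) (mm (I (Suc t)) (D (Suc t)) (\<psi> (Suc t))) (\<phi> (Suc t)) a i"
      by (rule mm_assoc[symmetric, OF fI fJ])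
    also have "\<dots> = mm (J (Suc t)) (mm (J t) (\<psi> t) (E (Suc t))) (\<phi> (Suc t)) a i"
      unfolding mm_def[of "J (Suc t)"] using psi a by (intro sum.cong refl) (simp add: chain_map_def)
    also have "\<dots> = mm (J t) (\<psi> t) (mm (J (Suc t)) (E (Suc t)) (\<phi> (Suc t))) a i"
      by (rule mm_assoc[OF fJ fJ])
    also have "\<dots> = mm (J t) (\<psi> t) (mm (I t) (\<phi> t) (D (Suc t))) a i"
      unfolding mm_def[of "J t" "\<psi> t"] using phi i by (intro sum.cong refl) (simp add: chain_map_def)
    also have "\<dots> = mm (I t) (mm (J t) (\<psi> t) (\<phi> t)) (D (Suc t)) a i"
      by (rule mm_assoc[symmetric, OF fJ fI])
    finally have "mm (I (Suc t)) (D (Suc t)) (mm (J (Suc t)) (\<psi> (Suc t)) (\<phi> (Suc t))) a i =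
        mm (I t) (mm (J t) (\<psi> t) (\<phi> t)) (D (Suc t)) a i" .
    then show ?thesis
      by (simp add: mm_minus_delta_right[OF fI i] mm_minus_delta_left[OF fI a])
  qed
  show ?thesis unfolding nullmap_def using z0 zS by auto
qed

fun hmap :: "(nat \<Rightarrow> 'i set) \<Rightarrow> (nat \<Rightarrow> 'i \<Rightarrow> 'i \<Rightarrow> 'a::comm_ring_1) \<Rightarrow> (nat \<Rightarrow> 'i \<Rightarrow> 'i \<Rightarrow> 'a) \<Rightarrow> nat \<Rightarrow> 'i \<Rightarrow> 'i \<Rightarrow> 'a" where
  "hmap I D X 0 = (\<lambda>a i. (SOME y. y \<in> vecs (I 1) \<and> (\<forall>b\<in>I 0. X 0 b i = (\<Sum>c\<in>I 1. D 1 b c * y c))) a)"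
| "hmap I D X (Suc t) = (\<lambda>a i. (SOME y. y \<in> vecs (I (Suc (Suc t))) \<and>
     (\<forall>b\<in>I (Suc t). X (Suc t) b i - mm (I t) (hmap I D X t) (D (Suc t)) b i = (\<Sum>c\<in>I (Suc (Suc t)). D (Suc (Suc t)) b c * y c))) a)"

declare hmap.simps[simp del]

lemma null_in_m:
  fixes s :: "'a::comm_ring_1 \<Rightarrow> 'b::ab_group_add \<Rightarrow> 'b" and I :: "nat \<Rightarrow> 'i set"
  assumes F: "free_res s A K I D g" and mi: "minimal_res m I D" and m: "is_ideal m"
    and X: "nullmap s K I D g X"
  shows "a \<in> I t \<Longrightarrow> c \<in> I t \<Longrightarrow> X t a c \<in> m"
proof -
  let ?H = "hmap I D X"
  have fI: "finite (I t)" for t using fr_fin[OF F] by auto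
  have minD: "D (Suc t) i j \<in> m" if "i \<in> I t" "j \<in> I (Suc t)" for t i j
    using mi that unfolding minimal_res_def by (metis diff_Suc_1 le_add1 plus_1_eq_Suc)
  have H0: "\<forall>b\<in>I 0. X 0 b i = mm (I 1) (D 1) (?H 0) b i" if i: "i \<in> I 0" for i
  proof -
    have "lincomb s (I 0) (\<lambda>b. X 0 b i) g \<in> K" using X i by (simp add: nullmap_def)
    then obtain y where "y \<in> vecs (I 1)" "\<forall>b\<in>I 0. X 0 b i = (\<Sum>c\<in>I 1. D 1 b c * y c)"
      using R2a[OF F] by blast
    then have ex: "\<exists>y. y \<in> vecs (I 1) \<and> (\<forall>b\<in>I 0. X 0 b i = (\<Sum>c\<in>I 1. D 1 b c * y c))" by blast
    show ?thesis using someI_ex[OF ex] by (simp add: hmap.simps(1) mm_def)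
  qed
  have HS: "\<forall>i\<in>I (Suc t). \<forall>b\<in>I (Suc t). X (Suc t) b i - mm (I t) (?H t) (D (Suc t)) b i
      = mm (I (Suc (Suc t))) (D (Suc (Suc t))) (?H (Suc t)) b i" for t
  proof (induction t)
    case 0
    show ?case
    proof
      fix i assume i: "i \<in> I (Suc 0)"
      let ?v = "\<lambda>b. X (Suc 0) b i - mm (I 0) (?H 0) (D (Suc 0)) b i"
      have z: "(\<Sum>b\<in>I (Suc 0). D (Suc 0) a b * ?v b) = 0" if a: "a \<in> I 0" for a
      proof -
        have "(\<Sum>b\<in>I (Suc 0). D (Suc 0) a b * ?v b) = mm (I (Suc 0)) (D (Suc 0)) (X (Suc 0)) a i
             - mm (I (Suc 0)) (D (Suc 0)) (mm (I 0) (?H 0) (D (Suc 0))) a i"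
          by (simp add: mm_def right_diff_distrib sum_subtractf)
        also have "\<dots> = mm (I 0) (X 0) (D (Suc 0)) a i - mm (I 0) (mm (I (Suc 0)) (D (Suc 0)) (?H 0)) (D (Suc 0)) a i"
          using X i a by (simp add: nullmap_def mm_assoc[OF fI fI])
        also have "\<dots> = (\<Sum>c\<in>I 0. (X 0 a c - mm (I (Suc 0)) (D (Suc 0)) (?H 0) a c) * D (Suc 0) c i)"
          by (simp add: mm_def left_diff_distrib sum_subtractf)
        also have "\<dots> = 0" using H0 a by (intro sum.neutral) simp
        finally show ?thesis .
      qed
      then obtain y where "y \<in> vecs (I (Suc (Suc 0)))" "\<forall>b\<in>I (Suc 0). ?v b = (\<Sum>c\<in>I (Suc (Suc 0)). D (Suc (Suc 0)) b c * y c)"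
        using R3a[OF F, of 0 ?v] by blast
      then have ex: "\<exists>y. y \<in> vecs (I (Suc (Suc 0))) \<and> (\<forall>b\<in>I (Suc 0). ?v b = (\<Sum>c\<in>I (Suc (Suc 0)). D (Suc (Suc 0)) b c * y c))"
        by blast
      show "\<forall>b\<in>I (Suc 0). X (Suc 0) b i - mm (I 0) (?H 0) (D (Suc 0)) b i
         = mm (I (Suc (Suc 0))) (D (Suc (Suc 0))) (?H (Suc 0)) b i"
        using someI_ex[OF ex] by (simp add: hmap.simps(2)[of I D X 0] mm_def)
    qed
  next
    case (Suc t)
    show ?case
    proof
      fix i assume i: "i \<in> I (Suc (Suc t))"
      let ?v = "\<lambda>b. X (Suc (Suc t)) b i - mm (I (Suc t)) (?H (Suc t)) (D (Suc (Suc t))) b i"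
      have z: "(\<Sum>b\<in>I (Suc (Suc t)). D (Suc (Suc t)) a b * ?v b) = 0" if a: "a \<in> I (Suc t)" for a
      proof -
        have "(\<Sum>b\<in>I (Suc (Suc t)). D (Suc (Suc t)) a b * ?v b) = mm (I (Suc (Suc t))) (D (Suc (Suc t))) (X (Suc (Suc t))) a i
             - mm (I (Suc (Suc t))) (D (Suc (Suc t))) (mm (I (Suc t)) (?H (Suc t)) (D (Suc (Suc t)))) a i"
          by (simp add: mm_def right_diff_distrib sum_subtractf)
        also have "\<dots> = mm (I (Suc t)) (X (Suc t)) (D (Suc (Suc t))) a i
            - mm (I (Suc t)) (mm (I (Suc (Suc t))) (D (Suc (Suc t))) (?H (Suc t))) (D (Suc (Suc t))) a i"
          using X i a by (simp add: nullmap_def mm_assoc[OF fI fI])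
        also have "\<dots> = (\<Sum>c\<in>I (Suc t). (X (Suc t) a c - mm (I (Suc (Suc t))) (D (Suc (Suc t))) (?H (Suc t)) a c) * D (Suc (Suc t)) c i)"
          by (simp add: mm_def left_diff_distrib sum_subtractf)
        also have "\<dots> = (\<Sum>c\<in>I (Suc t). mm (I t) (?H t) (D (Suc t)) a c * D (Suc (Suc t)) c i)"
          using Suc.IH a by (intro sum.cong refl) (simp add: algebra_simps)
        also have "\<dots> = mm (I (Suc t)) (mm (I t) (?H t) (D (Suc t))) (D (Suc (Suc t))) a i"
          by (simp add: mm_def[of "I (Suc t)"])
        also have "\<dots> = mm (I t) (?H t) (mm (I (Suc t)) (D (Suc t)) (D (Suc (Suc t)))) a i"
          by (rule mm_assoc[OF fI fI])
        also have "\<dots> = 0" unfolding mm_def[of "I t"] using R3b[OF F _ i] by simp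
        finally show ?thesis .
      qed
      then obtain y where "y \<in> vecs (I (Suc (Suc (Suc t))))" "\<forall>b\<in>I (Suc (Suc t)). ?v b = (\<Sum>c\<in>I (Suc (Suc (Suc t))). D (Suc (Suc (Suc t))) b c * y c)"
        using R3a[OF F, of "Suc t" ?v] by blast
      then have ex: "\<exists>y. y \<in> vecs (I (Suc (Suc (Suc t)))) \<and> (\<forall>b\<in>I (Suc (Suc t)). ?v b = (\<Sum>c\<in>I (Suc (Suc (Suc t))). D (Suc (Suc (Suc t))) b c * y c))"
        by blast
      show "\<forall>b\<in>I (Suc (Suc t)). X (Suc (Suc t)) b i - mm (I (Suc t)) (?H (Suc t)) (D (Suc (Suc t))) b i
         = mm (I (Suc (Suc (Suc t)))) (D (Suc (Suc (Suc t)))) (?H (Suc (Suc t))) b i"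
        using someI_ex[OF ex] by (simp add: hmap.simps(2)[of I D X "Suc t"] mm_def)
    qed
  qed
  assume a: "a \<in> I t" and c: "c \<in> I t"
  show "X t a c \<in> m"
  proof (cases t)
    case 0
    then have "X t a c = (\<Sum>b\<in>I 1. D 1 a b * ?H 0 b c)" using H0 a c by (simp add: mm_def)
    also have "\<dots> \<in> m" using a 0 minD[of a 0] by (intro ideal_sum[OF m] ideal_multR[OF m]) auto
    finally show ?thesis .
  next
    case (Suc t')
    then have "X t a c = mm (I t') (?H t') (D (Suc t')) a c + mm (I (Suc (Suc t'))) (D (Suc (Suc t'))) (?H (Suc t')) a c"
      using HS[of t'] a c by (simp add: algebra_simps)
    also have "\<dots> \<in> m" unfolding mm_def using a c Suc
      by (intro ideal_add[OF m] ideal_sum[OF m] ideal_multR[OF m] ideal_multL[OF m] minD) auto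
    finally show ?thesis .
  qed
qed

lemma rank_ineq:
  fixes s :: "'a::comm_ring_1 \<Rightarrow> 'b::ab_group_add \<Rightarrow> 'b" and I :: "nat \<Rightarrow> 'i set" and J :: "nat \<Rightarrow> 'j set"
  assumes F: "free_res s A K I D g" and mi: "minimal_res m I D" and G: "free_res s A K J E h"
    and m: "is_ideal m" "1 \<notin> m" "\<forall>x. x \<notin> m \<longrightarrow> x dvd 1"
  shows "card (I t) \<le> card (J t)"
proof -
  let ?phi = "cmap s K I D g J E h" and ?psi = "cmap s K J E h I D g"
  have N: "nullmap s K I D g (\<lambda>t b i. mm (J t) (?psi t) (?phi t) b i - (if b = i then 1 else 0))"
    by (rule compose_null[OF F G chain_map_exists[OF F G] chain_map_exists[OF G F]])
  show ?thesis
  proof (rule rank_le[OF m fr_fin[OF F] fr_fin[OF G]])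
    show "\<forall>a\<in>I t. \<forall>b\<in>I t. (\<Sum>y\<in>J t. ?psi t a y * ?phi t y b) - (if a = b then 1 else 0) \<in> m"
      using null_in_m[OF F mi m(1) N] by (simp add: mm_def)
  qed
qed

lemma betti_eq:
  fixes s :: "'a::comm_ring_1 \<Rightarrow> 'b::ab_group_add \<Rightarrow> 'b" and I :: "nat \<Rightarrow> nat set"
  assumes F: "free_res s A K I D g" and mi: "minimal_res m I D" and m: "is_ideal m" "1 \<notin> m" "\<forall>x. x \<notin> m \<longrightarrow> x dvd 1"
  shows "betti m s A K t = card (I t)"
  unfolding betti_def
proof (rule the_equality)
  show "\<exists>(I'::nat \<Rightarrow> nat set) D g. free_res s A K I' D g \<and> minimal_res m I' D \<and> card (I' t) = card (I t)"
    using F mi by blast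
next
  fix n assume "\<exists>(I'::nat \<Rightarrow> nat set) D g. free_res s A K I' D g \<and> minimal_res m I' D \<and> card (I' t) = n"
  then obtain I' :: "nat \<Rightarrow> nat set" and D' g' where F': "free_res s A K I' D' g'" "minimal_res m I' D'" "card (I' t) = n"
    by blast
  show "n = card (I t)" using rank_ineq[OF F(1) mi F'(1) m, of t] rank_ineq[OF F'(1) F'(2) F m, of t] F'(3) by simp
qed

context
  fixes s :: "'a::comm_ring_1 \<Rightarrow> 'b::ab_group_add \<Rightarrow> 'b" and I :: "nat \<Rightarrow> 'i set" and D g
    and f :: "'i \<Rightarrow> nat" and U and A K
  assumes fr: "free_res s A K I D g" and inj: "inj_on f U" and IU: "\<And>t. I t \<subseteq> U"
begin

definition rr where "rr = inv_into U f"
definition pull :: "'i set \<Rightarrow> (nat \<Rightarrow> 'a) \<Rightarrow> 'i \<Rightarrow> 'a" where "pull S x' = (\<lambda>i. if i \<in> S then x' (f i) else 0)"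
definition push :: "'i set \<Rightarrow> ('i \<Rightarrow> 'a) \<Rightarrow> nat \<Rightarrow> 'a" where "push S x = (\<lambda>a. if a \<in> f ` S then x (rr a) else 0)"

lemma rr_f: "i \<in> I t \<Longrightarrow> rr (f i) = i"
  unfolding rr_def using inj IU by (meson inv_into_f_f subsetD)

lemma inj_I: "inj_on f (I t)" using inj IU inj_on_subset by blast

lemma pull_vecs: "pull S x' \<in> vecs S" by (simp add: pull_def vecs_def)
lemma push_vecs: "push S x \<in> vecs (f ` S)" by (simp add: push_def vecs_def)

lemma push_pull: "x' \<in> vecs (f ` I t) \<Longrightarrow> push (I t) (pull (I t) x') = x'"
  by (auto simp: push_def pull_def fun_eq_iff vecs_def rr_f)

lemma pull_push: "x \<in> vecs (I t) \<Longrightarrow> pull (I t) (push (I t) x) = x"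
  by (auto simp: push_def pull_def fun_eq_iff vecs_def rr_f)

definition D' where "D' t a b = D t (rr a) (rr b)"
definition g' where "g' a = g (rr a)"

lemma lincomb_pull: "lincomb s (f ` I t) x' g' = lincomb s (I t) (pull (I t) x') g"
  unfolding lincomb_def sum.reindex[OF inj_I] pull_def g'_def by (intro sum.cong) (auto simp: rr_f)

lemma matapp_pull: "matapp (f ` I t) (f ` I u) (D' v) y' = push (I t) (matapp (I t) (I u) (D v) (pull (I u) y'))"
proof -
  have "(\<Sum>b\<in>f ` I u. D' v (f i) b * y' b) = (\<Sum>k\<in>I u. D v i k * pull (I u) y' k)" if "i \<in> I t" for i
    unfolding sum.reindex[OF inj_I] D'_def pull_def using that by (intro sum.cong) (auto simp: rr_f)
  then show ?thesis by (auto simp: matapp_def push_def fun_eq_iff rr_f)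
qed

lemma push_inj0:
  assumes x: "x \<in> vecs (I t)" shows "push (I t) x = 0 \<longleftrightarrow> x = 0"
proof
  assume "push (I t) x = 0"
  then have "pull (I t) (push (I t) x) = pull (I t) 0" by simp
  also have "pull (I t) 0 = 0" by (simp add: pull_def fun_eq_iff)
  finally show "x = 0" using pull_push[OF x] by simp
qed (simp add: push_def fun_eq_iff)

lemma matapp_vecs: "matapp X Y M x \<in> vecs X" by (simp add: matapp_def vecs_def)

lemma free_res_reindex: "free_res s A K (\<lambda>t. f ` I t) D' g'"
proof -
  have ex: "(\<exists>y'\<in>vecs (f ` I u). x' = matapp (f ` I t) (f ` I u) (D' v) y') \<longleftrightarrow>
            (\<exists>y\<in>vecs (I u). pull (I t) x' = matapp (I t) (I u) (D v) y)" if x': "x' \<in> vecs (f ` I t)" for x' t u v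
  proof
    assume "\<exists>y'\<in>vecs (f ` I u). x' = matapp (f ` I t) (f ` I u) (D' v) y'"
    then obtain y' where e: "x' = matapp (f ` I t) (f ` I u) (D' v) y'" by blast
    have "pull (I t) x' = pull (I t) (push (I t) (matapp (I t) (I u) (D v) (pull (I u) y')))"
      unfolding e matapp_pull ..
    also have "\<dots> = matapp (I t) (I u) (D v) (pull (I u) y')" by (rule pull_push[OF matapp_vecs])
    finally have "pull (I t) x' = matapp (I t) (I u) (D v) (pull (I u) y')" .
    then show "\<exists>y\<in>vecs (I u). pull (I t) x' = matapp (I t) (I u) (D v) y" using pull_vecs by blast
  next
    assume "\<exists>y\<in>vecs (I u). pull (I t) x' = matapp (I t) (I u) (D v) y"
    then obtain y where y: "y \<in> vecs (I u)" "pull (I t) x' = matapp (I t) (I u) (D v) y" by blast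
    have "matapp (f ` I t) (f ` I u) (D' v) (push (I u) y) = push (I t) (matapp (I t) (I u) (D v) (pull (I u) (push (I u) y)))"
      by (rule matapp_pull)
    also have "\<dots> = push (I t) (matapp (I t) (I u) (D v) y)" unfolding pull_push[OF y(1)] ..
    also have "\<dots> = push (I t) (pull (I t) x')" unfolding y(2) ..
    also have "\<dots> = x'" by (rule push_pull[OF x'])
    finally show "\<exists>y'\<in>vecs (f ` I u). x' = matapp (f ` I t) (f ` I u) (D' v) y'" using push_vecs by (intro bexI[of _ "push (I u) y"]) auto
  qed
  have ker: "matapp (f ` I t) (f ` I u) (D' v) x' = 0 \<longleftrightarrow> matapp (I t) (I u) (D v) (pull (I u) x') = 0" for x' t u v
    unfolding matapp_pull by (rule push_inj0[OF matapp_vecs])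
  show ?thesis unfolding free_res_def
  proof (intro conjI allI ballI impI)
    show "\<And>t. finite (f ` I t)" using fr by (simp add: free_res_def)
    show "subquot s A K" using fr by (simp add: free_res_def)
    show "g' ` f ` I 0 \<subseteq> A" using fr by (auto simp: free_res_def g'_def rr_f)
  next
    fix a assume "a \<in> A"
    then obtain x where x: "x \<in> vecs (I 0)" "a - lincomb s (I 0) x g \<in> K" using fr by (auto simp: free_res_def)
    have "lincomb s (f ` I 0) (push (I 0) x) g' = lincomb s (I 0) x g"
      unfolding lincomb_pull pull_push[OF x(1)] ..
    then show "\<exists>x\<in>vecs (f ` I 0). a - lincomb s (f ` I 0) x g' \<in> K"
      using push_vecs x(2) by (intro bexI[of _ "push (I 0) x"]) auto
  next
    fix x' :: "nat \<Rightarrow> 'a" assume x': "x' \<in> vecs (f ` I 0)"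
    have "lincomb s (I 0) (pull (I 0) x') g \<in> K \<longleftrightarrow> (\<exists>y\<in>vecs (I 1). pull (I 0) x' = matapp (I 0) (I 1) (D 1) y)"
      by (rule fr_exact0[OF fr pull_vecs])
    then show "lincomb s (f ` I 0) x' g' \<in> K \<longleftrightarrow> (\<exists>y\<in>vecs (f ` I 1). x' = matapp (f ` I 0) (f ` I 1) (D' 1) y)"
      by (simp only: lincomb_pull ex[OF x'])
  next
    fix t and x' :: "nat \<Rightarrow> 'a" assume t: "1 \<le> t" and x': "x' \<in> vecs (f ` I t)"
    have "matapp (I (t - 1)) (I t) (D t) (pull (I t) x') = 0 \<longleftrightarrow> (\<exists>y\<in>vecs (I (Suc t)). pull (I t) x' = matapp (I t) (I (Suc t)) (D (Suc t)) y)"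
      by (rule fr_exact[OF fr t pull_vecs])
    then show "matapp (f ` I (t - 1)) (f ` I t) (D' t) x' = 0 \<longleftrightarrow> (\<exists>y\<in>vecs (f ` I (Suc t)). x' = matapp (f ` I t) (f ` I (Suc t)) (D' (Suc t)) y)"
      by (simp only: ker ex[OF x'])
  qed
qed

lemma minimal_reindex: "minimal_res m I D \<Longrightarrow> minimal_res m (\<lambda>t. f ` I t) D'"
  unfolding minimal_res_def D'_def by (auto simp: rr_f)

lemma card_reindex: "card (f ` I t) = card (I t)"
  using card_image[OF inj_I] .

end

lemma SW_minimal:
  assumes mi: "minimal_res m I D" and m: "is_ideal m"
  shows "minimal_res m (symI j q I) (\<lambda>_. symD q I D)"
  unfolding minimal_res_def
proof (intro allI impI ballI)
  fix t ys xs assume xs: "xs \<in> symI j q I t"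
  have minD: "D (Suc i) a b \<in> m" if "a \<in> I i" "b \<in> I (Suc i)" for i a b
    using mi that unfolding minimal_res_def by (metis diff_Suc_1 le_add1 plus_1_eq_Suc)
  have comp: "sym_comp I D i ys xs \<in> m" if i: "i < q" for i
  proof -
    have sub: "set_mset (xs ! Suc i) \<subseteq> I (Suc i)" using xs i by (simp add: symI_def)
    show ?thesis unfolding sym_comp_def using sub
      by (auto intro!: ideal_sum[OF m] ideal_multL[OF m] ideal_neg[OF m] minD simp: ideal_zero[OF m])
  qed
  show "symD q I D ys xs \<in> m" unfolding symD_def
    using comp by (intro ideal_sum[OF m] ideal_multL[OF m]) auto
qed

lemma card_lists:
  assumes "\<And>i. i < n \<Longrightarrow> finite (A i)"
  shows "finite {xs. length xs = n \<and> (\<forall>i<n. xs ! i \<in> A i)} \<and>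
         card {xs. length xs = n \<and> (\<forall>i<n. xs ! i \<in> A i)} = (\<Prod>i<n. card (A i))"
  using assms
proof (induction n arbitrary: A)
  case 0
  have "{xs. length xs = 0 \<and> (\<forall>i<0. xs ! i \<in> A i)} = {[]}" by auto
  then show ?case by simp
next
  case (Suc n)
  let ?S = "{ys. length ys = n \<and> (\<forall>i<n. ys ! i \<in> A (Suc i))}"
  have IH: "finite ?S \<and> card ?S = (\<Prod>i<n. card (A (Suc i)))" using Suc.IH[of "\<lambda>i. A (Suc i)"] Suc.prems by simp
  have eq: "{xs. length xs = Suc n \<and> (\<forall>i<Suc n. xs ! i \<in> A i)} = (\<lambda>(x, ys). x # ys) ` (A 0 \<times> ?S)"
  proof (intro Set.set_eqI iffI)
    fix xs assume "xs \<in> {xs. length xs = Suc n \<and> (\<forall>i<Suc n. xs ! i \<in> A i)}"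
    then have xs: "length xs = Suc n" "\<forall>i<Suc n. xs ! i \<in> A i" by auto
    then obtain x ys where "xs = x # ys" by (cases xs) auto
    then show "xs \<in> (\<lambda>(x, ys). x # ys) ` (A 0 \<times> ?S)" using xs
      by (auto intro!: image_eqI[of _ _ "(x, ys)"])
  next
    fix xs assume "xs \<in> (\<lambda>(x, ys). x # ys) ` (A 0 \<times> ?S)"
    then show "xs \<in> {xs. length xs = Suc n \<and> (\<forall>i<Suc n. xs ! i \<in> A i)}"
      by (auto simp: less_Suc_eq_0_disj)
  qed
  have inj: "inj_on (\<lambda>(x, ys). x # ys) (A 0 \<times> ?S)" by (auto simp: inj_on_def)
  have "finite (A 0)" using Suc.prems by simp
  moreover have "(\<Prod>i<Suc n. card (A i)) = card (A 0) * (\<Prod>i<n. card (A (Suc i)))"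
    by (rule prod.lessThan_Suc_shift)
  ultimately show ?case unfolding eq using IH
    by (simp add: card_image[OF inj] card_cartesian_product del: prod.lessThan_Suc)
qed

definition Tset :: "(nat \<Rightarrow> nat set) \<Rightarrow> nat \<Rightarrow> nat \<Rightarrow> nat multiset set" where
  "Tset I i k = {X. set_mset X \<subseteq> I i \<and> (odd i \<longrightarrow> (\<forall>x. count X x \<le> 1)) \<and> size X = k}"

definition cnt :: "(nat \<Rightarrow> nat set) \<Rightarrow> nat \<Rightarrow> nat \<Rightarrow> nat" where
  "cnt I i k = (if even i then (card (I i) + k - 1) choose k else card (I i) choose k)"

lemma card_Tset:
  assumes fin: "finite (I i)"
  shows "finite (Tset I i k) \<and> card (Tset I i k) = cnt I i k"
proof (cases "even i")
  case True
  then have "Tset I i k = multisets_of_size (I i) k" by (simp add: Tset_def multisets_of_size_def)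
  then show ?thesis using True card_multisets_of_size[OF fin] finite_multisets_of_size[OF fin] by (simp add: cnt_def)
next
  case False
  have eq: "Tset I i k = mset_set ` {B. B \<subseteq> I i \<and> card B = k}"
  proof (intro Set.set_eqI iffI)
    fix X assume "X \<in> Tset I i k"
    then have X: "set_mset X \<subseteq> I i" "\<forall>x. count X x \<le> 1" "size X = k" using False by (auto simp: Tset_def)
    have XX: "X = mset_set (set_mset X)"
    proof (rule multiset_eqI)
      fix x show "count X x = count (mset_set (set_mset X)) x"
      proof -
        have "count X x = 0 \<or> count X x = 1" using X(2)[rule_format, of x] by auto
        moreover have "count X x = 1 \<Longrightarrow> x \<in># X" by (metis count_eq_zero_iff one_neq_zero)
        ultimately show ?thesis by (auto simp: count_eq_zero_iff count_mset_set')
      qed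
    qed
    then have "card (set_mset X) = k" using X(3) by (metis size_mset_set)
    then show "X \<in> mset_set ` {B. B \<subseteq> I i \<and> card B = k}" using X(1) XX by blast
  next
    fix X assume "X \<in> mset_set ` {B. B \<subseteq> I i \<and> card B = k}"
    then obtain B where B: "B \<subseteq> I i" "card B = k" "X = mset_set B" by blast
    have "finite B" using B(1) fin finite_subset by blast
    then show "X \<in> Tset I i k" using B False by (auto simp: Tset_def count_mset_set')
  qed
  have inj: "inj_on mset_set {B. B \<subseteq> I i \<and> card B = k}"
  proof (rule inj_onI)
    fix x y assume "x \<in> {B. B \<subseteq> I i \<and> card B = k}" "y \<in> {B. B \<subseteq> I i \<and> card B = k}" "mset_set x = mset_set y"
    moreover have "finite x" "finite y" using calculation(1,2) fin finite_subset by auto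
    ultimately show "x = y" by simp
  qed
  have "finite {B. B \<subseteq> I i \<and> card B = k}" using fin by simp
  then show ?thesis unfolding eq card_image[OF inj] using n_subsets[OF fin, of k] False by (simp add: cnt_def)
qed

definition Av :: "nat \<Rightarrow> nat \<Rightarrow> nat \<Rightarrow> nat list set" where
  "Av j t n = {a::nat list. length a = Suc n \<and> sum_list a = j \<and> (\<Sum>i\<le>n. i * a ! i) = t}"

lemma finite_Av: "finite (Av j t n)"
proof -
  have "Av j t n \<subseteq> {a. set a \<subseteq> {0..j} \<and> length a = Suc n}"
    by (auto simp: Av_def dest: member_le_sum_list)
  then show ?thesis by (rule finite_subset) (simp add: finite_lists_length_eq)
qed

lemma card_symI:
  assumes fin: "\<And>i. finite (I i)"
  shows "card (symI j q I t) = (\<Sum>a\<in>Av j t q. \<Prod>i<Suc q. cnt I i (a ! i))"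
proof -
  let ?L = "\<lambda>a. {xs. length xs = Suc q \<and> (\<forall>i<Suc q. xs ! i \<in> Tset I i (a ! i))}"
  have sl: "sum_list (map size xs) = (\<Sum>i\<le>q. size (xs ! i))" if "length xs = Suc q" for xs :: "nat multiset list"
    using that by (simp add: sum_list_sum_nth atLeast0LessThan lessThan_Suc_atMost)
  have eq: "symI j q I t = (\<Union>a\<in>Av j t q. ?L a)"
  proof (intro Set.set_eqI iffI)
    fix xs assume xs: "xs \<in> symI j q I t"
    then have "map size xs \<in> Av j t q" using sl by (auto simp: symI_def Av_def)
    moreover have "xs \<in> ?L (map size xs)" using xs by (auto simp: symI_def Tset_def less_Suc_eq_le)
    ultimately show "xs \<in> (\<Union>a\<in>Av j t q. ?L a)" by blast
  next
    fix xs assume "xs \<in> (\<Union>a\<in>Av j t q. ?L a)"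
    then obtain a where a: "a \<in> Av j t q" and xs: "xs \<in> ?L a" by blast
    have sz: "size (xs ! i) = a ! i" if "i \<le> q" for i using xs that by (auto simp: Tset_def less_Suc_eq_le)
    have "(\<Sum>i\<le>q. size (xs ! i)) = (\<Sum>i\<le>q. a ! i)" using sz by simp
    also have "\<dots> = j"
    proof -
      have la: "length a = Suc q" "sum_list a = j" using a by (auto simp: Av_def)
      have "sum_list a = (\<Sum>i<Suc q. a ! i)" using la(1) sum_list_sum_nth[of a] by (simp add: atLeast0LessThan)
      then show ?thesis using la(2) by (simp add: lessThan_Suc_atMost)
    qed
    finally have s1: "(\<Sum>i\<le>q. size (xs ! i)) = j" .
    have "(\<Sum>i\<le>q. i * size (xs ! i)) = (\<Sum>i\<le>q. i * a ! i)" using sz by simp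
    then have s2: "(\<Sum>i\<le>q. i * size (xs ! i)) = t" using a by (simp add: Av_def)
    show "xs \<in> symI j q I t" using xs s1 s2 by (auto simp: symI_def Tset_def less_Suc_eq_le)
  qed
  have finL: "finite (?L a) \<and> card (?L a) = (\<Prod>i<Suc q. cnt I i (a ! i))" for a
  proof -
    have "finite (?L a) \<and> card (?L a) = (\<Prod>i<Suc q. card (Tset I i (a ! i)))"
      by (rule card_lists) (use card_Tset fin in blast)
    then show ?thesis using card_Tset[OF fin] by simp
  qed
  have disj: "?L a \<inter> ?L b = {}" if "a \<in> Av j t q" "b \<in> Av j t q" "a \<noteq> b" for a b
  proof (rule ccontr)
    assume "?L a \<inter> ?L b \<noteq> {}"
    then obtain xs where xs: "xs \<in> ?L a" "xs \<in> ?L b" by blast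
    have "a ! i = b ! i" if "i < Suc q" for i using xs that by (auto simp: Tset_def)
    then have "a = b" using that(1,2) by (intro nth_equalityI) (auto simp: Av_def)
    then show False using that(3) by simp
  qed
  show ?thesis unfolding eq
    by (subst card_UN_disjoint) (use finite_Av finL disj in auto)
qed

lemma Av_snoc: "length b = Suc n \<Longrightarrow> b @ [0] \<in> Av j t (Suc n) \<longleftrightarrow> b \<in> Av j t n"
  by (simp add: Av_def nth_append)

lemma F_stable:
  assumes z: "\<And>k. k > 0 \<Longrightarrow> cnt I (Suc n) k = 0"
  shows "(\<Sum>a\<in>Av j t (Suc n). \<Prod>i<Suc (Suc n). cnt I i (a ! i)) = (\<Sum>a\<in>Av j t n. \<Prod>i<Suc n. cnt I i (a ! i))"
proof -
  let ?S = "(\<lambda>a. a @ [0]) ` Av j t n"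
  have sub: "?S \<subseteq> Av j t (Suc n)" using Av_snoc by (auto simp: Av_def)
  have zero: "(\<Prod>i<Suc (Suc n). cnt I i (a ! i)) = 0" if a: "a \<in> Av j t (Suc n) - ?S" for a
  proof -
    have la: "length a = Suc (Suc n)" using a by (simp add: Av_def)
    have "a ! Suc n \<noteq> 0"
    proof
      assume a0: "a ! Suc n = 0"
      have "a = butlast a @ [last a]" using la by (metis append_butlast_last_id list.size(3) nat.simps(3))
      moreover have "last a = a ! Suc n"
      proof -
        have "a \<noteq> []" using la by auto
        then show ?thesis using last_conv_nth[of a] la by simp
      qed
      ultimately have ab: "a = butlast a @ [0]" using a0 by simp
      have "length (butlast a) = Suc n" using la by simp
      then have "butlast a \<in> Av j t n" using Av_snoc a ab by (metis DiffD1)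
      then show False using a ab by blast
    qed
    then show ?thesis using z by (intro prod_zero) (auto intro!: bexI[of _ "Suc n"])
  qed
  have "(\<Sum>a\<in>Av j t (Suc n). \<Prod>i<Suc (Suc n). cnt I i (a ! i)) = (\<Sum>a\<in>?S. \<Prod>i<Suc (Suc n). cnt I i (a ! i))"
    using sum.mono_neutral_left[OF finite_Av sub] zero by (metis (no_types, lifting))
  also have "\<dots> = (\<Sum>a\<in>Av j t n. \<Prod>i<Suc (Suc n). cnt I i ((a @ [0]) ! i))"
    using sum.reindex[of "\<lambda>a. a @ [0]" "Av j t n" "\<lambda>a. \<Prod>i<Suc (Suc n). cnt I i (a ! i)"] by (simp add: inj_on_def)
  also have "\<dots> = (\<Sum>a\<in>Av j t n. \<Prod>i<Suc n. cnt I i (a ! i))"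
  proof (rule sum.cong[OF refl])
    fix a assume "a \<in> Av j t n"
    then have la: "length a = Suc n" by (simp add: Av_def)
    have "(\<Prod>i<Suc (Suc n). cnt I i ((a @ [0]) ! i)) = (\<Prod>i<Suc n. cnt I i ((a @ [0]) ! i)) * cnt I (Suc n) 0"
      using la by (simp add: nth_append)
    also have "\<dots> = (\<Prod>i<Suc n. cnt I i (a ! i))" using la by (simp add: nth_append cnt_def)
    finally show "(\<Prod>i<Suc (Suc n). cnt I i ((a @ [0]) ! i)) = (\<Prod>i<Suc n. cnt I i (a ! i))" .
  qed
  finally show ?thesis .
qed

lemma F_stable_iter:
  assumes z: "\<And>i. i > L \<Longrightarrow> I i = {}"
  shows "(\<Sum>a\<in>Av j t (L + d). \<Prod>i<Suc (L + d). cnt I i (a ! i)) = (\<Sum>a\<in>Av j t L. \<Prod>i<Suc L. cnt I i (a ! i))"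
proof (induction d)
  case (Suc d)
  have "\<And>k. k > 0 \<Longrightarrow> cnt I (Suc (L + d)) k = 0" using z[of "Suc (L + d)"] by (auto simp: cnt_def)
  then show ?case using F_stable[of I "L + d" j t] Suc.IH by simp
qed simp

lemma prod_split_parity:
  "(\<Prod>i<Suc p. cnt I i (a ! i)) =
   (\<Prod>i\<in>{i. i \<le> p \<and> even i}. (card (I i) + a ! i - 1) choose (a ! i)) *
   (\<Prod>i\<in>{i. i \<le> p \<and> odd i}. card (I i) choose (a ! i))"
proof -
  have u: "{..<Suc p} = {i. i \<le> p \<and> even i} \<union> {i. i \<le> p \<and> odd i}" by auto
  have f1: "finite {i. i \<le> p \<and> even i}" and f2: "finite {i. i \<le> p \<and> odd i}" by auto
  have "(\<Prod>i<Suc p. cnt I i (a ! i)) = (\<Prod>i\<in>{i. i \<le> p \<and> even i}. cnt I i (a ! i)) * (\<Prod>i\<in>{i. i \<le> p \<and> odd i}. cnt I i (a ! i))"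
    unfolding u by (rule prod.union_disjoint[OF f1 f2]) auto
  also have "\<dots> = (\<Prod>i\<in>{i. i \<le> p \<and> even i}. (card (I i) + a ! i - 1) choose (a ! i)) *
   (\<Prod>i\<in>{i. i \<le> p \<and> odd i}. card (I i) choose (a ! i))"
    by (intro arg_cong2[where f = "(*)"] prod.cong) (auto simp: cnt_def)
  finally show ?thesis .
qed

theorem corollary5p2:
  fixes m :: "'a::comm_ring_1 set" and s :: "'a \<Rightarrow> 'm::ab_group_add \<Rightarrow> 'm" and j p :: nat
  assumes "noetherian_ring TYPE('a)" and "local_ring_max m"
    and "module s" and "fin_gen s" and "j \<ge> 2"
    and "pdim s UNIV {0} = enat p"
    and "SW m s j"
  shows "\<forall>t. enat t \<le> pdim sym_scale (symA j) (symK s j) \<longrightarrow>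
    betti m sym_scale (symA j) (symK s j) t =
      (\<Sum>a\<in>{a::nat list. length a = Suc p \<and> sum_list a = j \<and> (\<Sum>i\<le>p. i * a ! i) = t}.
         (\<Prod>i\<in>{i. i \<le> p \<and> even i}. (betti m s UNIV {0} i + a ! i - 1) choose (a ! i)) *
         (\<Prod>i\<in>{i. i \<le> p \<and> odd i}. betti m s UNIV {0} i choose (a ! i)))"
proof (intro allI impI)
  fix t
  have mu: "\<forall>x. x \<notin> m \<longrightarrow> x dvd 1" using assms(2) by (simp add: local_ring_max_def)
  have mI: "is_ideal m" and m1: "1 \<notin> m"
  proof -
    show "is_ideal m" using assms(2) by (simp add: local_ring_max_def)
    show "1 \<notin> m"
    proof
      assume "1 \<in> m"
      then have "\<forall>r. r \<in> m" using assms(2) unfolding local_ring_max_def is_ideal_def by (metis mult.right_neutral)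
      then show False using assms(2) by (auto simp: local_ring_max_def)
    qed
  qed
  obtain q and I :: "nat \<Rightarrow> nat set" and D g g' where FM: "free_res s UNIV {0} I D g" and MI: "minimal_res m I D"
    and Iq: "\<forall>t>q. I t = {}" and FS: "free_res sym_scale (symA j) (symK s j) (symI j q I) (\<lambda>_. symD q I D) g'"
    using assms(7) unfolding SW_def by blast
  have fin: "\<And>i. finite (I i)" using fr_fin[OF FM] .
  have ex: "\<exists>n (I::nat \<Rightarrow> nat set) D g. free_res s UNIV {0} I D g \<and> (\<forall>t>n. I t = {})"
    using assms(6) unfolding pdim_def by (metis infinity_ne_i0 enat.distinct(2))
  then have "pdim s UNIV {0} = enat (LEAST n. \<exists>(I::nat \<Rightarrow> nat set) D g. free_res s UNIV {0} I D g \<and> (\<forall>t>n. I t = {}))"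
    unfolding pdim_def by simp
  then have pL: "p = (LEAST n. \<exists>(I::nat \<Rightarrow> nat set) D g. free_res s UNIV {0} I D g \<and> (\<forall>t>n. I t = {}))"
    using assms(6) by simp
  obtain J :: "nat \<Rightarrow> nat set" and E h where FJ: "free_res s UNIV {0} J E h" and Jp: "\<forall>t>p. J t = {}"
    using LeastI_ex[OF ex] unfolding pL[symmetric] by blast
  have Ip: "\<forall>i>p. I i = {}"
  proof (intro allI impI)
    fix i assume "p < i"
    then have "card (I i) \<le> 0" using rank_ineq[OF FM MI FJ mI m1 mu, of i] Jp by simp
    then show "I i = {}" using fin[of i] by simp
  qed
  have bettiM: "betti m s UNIV {0} i = card (I i)" for i by (rule betti_eq[OF FM MI mI m1 mu])
  let ?U = "\<Union>t. symI j q I t"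
  have finS: "finite (symI j q I t)" for t using fr_fin[OF FS] .
  have cU: "countable ?U" by (rule countable_UN[of UNIV]) (auto intro: countable_finite finS)
  let ?f = "to_nat_on ?U"
  have inj: "inj_on ?f ?U" by (rule inj_on_to_nat_on[OF cU])
  have IU: "\<And>t. symI j q I t \<subseteq> ?U" by auto
  have SWmin: "minimal_res m (symI j q I) (\<lambda>_. symD q I D)" by (rule SW_minimal[OF MI mI])
  have "\<exists>D'' g''. free_res sym_scale (symA j) (symK s j) (\<lambda>t. ?f ` symI j q I t) D'' g'' \<and>
           minimal_res m (\<lambda>t. ?f ` symI j q I t) D''"
    using free_res_reindex[OF FS inj IU] minimal_reindex[OF FS inj IU SWmin] by blast
  then obtain D'' g'' where FS': "free_res sym_scale (symA j) (symK s j) (\<lambda>t. ?f ` symI j q I t) D'' g''"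
    and MS': "minimal_res m (\<lambda>t. ?f ` symI j q I t) D''" by blast
  have "betti m sym_scale (symA j) (symK s j) t = card (?f ` symI j q I t)"
    using betti_eq[OF FS' MS' mI m1 mu] by simp
  also have "\<dots> = card (symI j q I t)" by (rule card_image[OF inj_on_subset[OF inj IU]])
  also have "\<dots> = (\<Sum>a\<in>Av j t q. \<Prod>i<Suc q. cnt I i (a ! i))" by (rule card_symI[OF fin])
  also have "\<dots> = (\<Sum>a\<in>Av j t p. \<Prod>i<Suc p. cnt I i (a ! i))"
  proof -
    let ?L = "min p q"
    have z: "\<And>i. i > ?L \<Longrightarrow> I i = {}"
    proof -
      fix i assume "i > ?L"
      then have "i > p \<or> i > q" by linarith
      then show "I i = {}" using Ip Iq by blast
    qed
    have qq: "?L + (q - ?L) = q" and pp: "?L + (p - ?L) = p" by auto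
    have 1: "(\<Sum>a\<in>Av j t q. \<Prod>i<Suc q. cnt I i (a ! i)) = (\<Sum>a\<in>Av j t ?L. \<Prod>i<Suc ?L. cnt I i (a ! i))"
      using F_stable_iter[where I = I and L = "min p q" and j = j and t = t and d = "q - ?L", OF z] unfolding qq .
    have 2: "(\<Sum>a\<in>Av j t p. \<Prod>i<Suc p. cnt I i (a ! i)) = (\<Sum>a\<in>Av j t ?L. \<Prod>i<Suc ?L. cnt I i (a ! i))"
      using F_stable_iter[where I = I and L = "min p q" and j = j and t = t and d = "p - ?L", OF z] unfolding pp .
    show ?thesis using 1 2 by simp
  qed
  also have "\<dots> = (\<Sum>a\<in>{a::nat list. length a = Suc p \<and> sum_list a = j \<and> (\<Sum>i\<le>p. i * a ! i) = t}.
         (\<Prod>i\<in>{i. i \<le> p \<and> even i}. (betti m s UNIV {0} i + a ! i - 1) choose (a ! i)) *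
         (\<Prod>i\<in>{i. i \<le> p \<and> odd i}. betti m s UNIV {0} i choose (a ! i)))"
    unfolding Av_def bettiM prod_split_parity ..
  finally show "betti m sym_scale (symA j) (symK s j) t =
      (\<Sum>a\<in>{a::nat list. length a = Suc p \<and> sum_list a = j \<and> (\<Sum>i\<le>p. i * a ! i) = t}.
         (\<Prod>i\<in>{i. i \<le> p \<and> even i}. (betti m s UNIV {0} i + a ! i - 1) choose (a ! i)) *
         (\<Prod>i\<in>{i. i \<le> p \<and> odd i}. betti m s UNIV {0} i choose (a ! i)))" .
qed

end
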